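(* Let $k>1$ and let $A=(a,b,1)$ with $a<-\frac1{k-1}$ and $b>-\frac1{k-1}$. If $H(A)\ge0$, then any component of $C_2\cap\{D: A\cdot D^2>0\}$ contains an open arc of points visible from $A$. If $H(A)\le 0$, then some open arc in $C_2\cap\{D: A\cdot D^2<0\}$ consists of points not visible from $A$.
   Context: Let $F=F_k(x,y,z)=-x^3-y^3-(z-x-y)^3+3kxy(z-x-y)$ with $k>1$, and let $H$ be its Hessian (determinant of the matrix of second partials), $H=-54k^2F_{k'}$ with $k'=(4-k^3)/(3k^2)$. In the affine plane $z=1$, $C_2$ is the affine branch of the real curve $H=0$ lying in the region $x>0,y>0,x+y>1$; it bounds a convex region $K$ of the affine plane (the side of $C_2$ containing points with $x,y\gg0$). $A\cdot D^2:=\frac13\sum_iA_i\,\partial F/\partial x_i(D)$. A point $D\in C_2$ is visible from $A$ if the line segment from $A$ to $D$ does not meet the interior of $K$. *)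

theory Defs
  imports "HOL-Analysis.Analysis"
begin

definition Fk :: "real \<Rightarrow> real \<Rightarrow> real \<Rightarrow> real \<Rightarrow> real" where
  "Fk k x y z = - (x^3) - y^3 - (z - x - y)^3 + 3 * k * x * y * (z - x - y)"

definition pdiff :: "(real \<Rightarrow> real \<Rightarrow> real \<Rightarrow> real) \<Rightarrow> nat \<Rightarrow> real \<Rightarrow> real \<Rightarrow> real \<Rightarrow> real" where
  "pdiff f i x y z =
     (if i = 0 then deriv (\<lambda>t. f t y z) x
      else if i = 1 then deriv (\<lambda>t. f x t z) y
      else deriv (\<lambda>t. f x y t) z)"

definition Hess :: "real \<Rightarrow> real \<Rightarrow> real \<Rightarrow> real \<Rightarrow> real" where
  "Hess k x y z =
     (let m = (\<lambda>i j. pdiff (pdiff (Fk k) j) i x y z) in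
        m 0 0 * (m 1 1 * m 2 2 - m 1 2 * m 2 1)
      - m 0 1 * (m 1 0 * m 2 2 - m 1 2 * m 2 0)
      + m 0 2 * (m 1 0 * m 2 1 - m 1 1 * m 2 0))"

text \<open>Polar pairing  A . D^2 = 1/3 sum_i A_i (dF/dx_i)(D),  points given by homogeneous coordinates.\<close>
definition polar :: "real \<Rightarrow> real \<times> real \<times> real \<Rightarrow> real \<times> real \<times> real \<Rightarrow> real" where
  "polar k A D = (case A of (a0, a1, a2) \<Rightarrow> case D of (d0, d1, d2) \<Rightarrow>
      (1/3) * (a0 * pdiff (Fk k) 0 d0 d1 d2 + a1 * pdiff (Fk k) 1 d0 d1 d2
               + a2 * pdiff (Fk k) 2 d0 d1 d2))"

definition C2 :: "real \<Rightarrow> (real \<times> real) set" where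
  "C2 k = {(x, y). 0 < x \<and> 0 < y \<and> 1 < x + y \<and> Hess k x y 1 = 0}"

text \<open>Interior of the convex region K bounded by C_2: the component of the complement
  of C_2 containing all points with both coordinates sufficiently large.\<close>
definition Kint :: "real \<Rightarrow> (real \<times> real) set" where
  "Kint k = {q. \<exists>N. \<forall>x y. N \<le> x \<and> N \<le> y \<longrightarrow> connected_component (- C2 k) q (x, y)}"

definition visible :: "real \<Rightarrow> real \<times> real \<Rightarrow> real \<times> real \<Rightarrow> bool" where
  "visible k A D \<longleftrightarrow> closed_segment A D \<inter> Kint k = {}"

definition open_arc :: "(real \<times> real) set \<Rightarrow> bool" where
  "open_arc S \<longleftrightarrow> S homeomorphic ({0<..<1} :: real set)"

end

theory Submission
  imports Defs
begin


lemma pdiff_0: "pdiff f 0 x y z = deriv (\<lambda>t. f t y z) x" by (simp add: pdiff_def)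
lemma pdiff_1: "pdiff f (Suc 0) x y z = deriv (\<lambda>t. f x t z) y" by (simp add: pdiff_def)
lemma pdiff_2: "pdiff f 2 x y z = deriv (\<lambda>t. f x y t) z" by (simp add: pdiff_def)


lemma pd0: "pdiff (Fk k) 0 = (\<lambda>x y z. -3*x^2 + 3*(z-x-y)^2 + 3*k*y*(z-x-y) - 3*k*x*y)"
  by (rule ext)+ (simp add: pdiff_0 Fk_def, rule DERIV_imp_deriv, (rule derivative_eq_intros refl | simp)+, (simp add: algebra_simps power2_eq_square)?)
lemma pd1: "pdiff (Fk k) (Suc 0) = (\<lambda>x y z. -3*y^2 + 3*(z-x-y)^2 + 3*k*x*(z-x-y) - 3*k*x*y)"
  by (rule ext)+ (simp add: pdiff_1 Fk_def, rule DERIV_imp_deriv, (rule derivative_eq_intros refl | simp)+, (simp add: algebra_simps power2_eq_square)?)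
lemma pd2: "pdiff (Fk k) 2 = (\<lambda>x y z. -3*(z-x-y)^2 + 3*k*x*y)"
  by (rule ext)+ (simp add: pdiff_2 Fk_def, rule DERIV_imp_deriv, (rule derivative_eq_intros refl | simp)+, (simp add: algebra_simps power2_eq_square)?)

lemma pdd:
  "pdiff (pdiff (Fk k) 0) 0 x y z = -6*x - 6*(z-x-y) - 6*k*y"
  "pdiff (pdiff (Fk k) 0) (Suc 0) x y z = -6*(z-x-y) + 3*k*(z-x-y) - 3*k*y - 3*k*x"
  "pdiff (pdiff (Fk k) 0) 2 x y z = 6*(z-x-y) + 3*k*y"
  "pdiff (pdiff (Fk k) (Suc 0)) 0 x y z = -6*(z-x-y) + 3*k*(z-x-y) - 3*k*x - 3*k*y"
  "pdiff (pdiff (Fk k) (Suc 0)) (Suc 0) x y z = -6*y - 6*(z-x-y) - 6*k*x"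
  "pdiff (pdiff (Fk k) (Suc 0)) 2 x y z = 6*(z-x-y) + 3*k*x"
  "pdiff (pdiff (Fk k) 2) 0 x y z = 6*(z-x-y) + 3*k*y"
  "pdiff (pdiff (Fk k) 2) (Suc 0) x y z = 6*(z-x-y) + 3*k*x"
  "pdiff (pdiff (Fk k) 2) 2 x y z = -6*(z-x-y)"
  by (simp_all only: pd0 pd1 pd2 pdiff_0 pdiff_1 pdiff_2; rule DERIV_imp_deriv, (rule derivative_eq_intros refl | simp)+, (simp add: algebra_simps power2_eq_square)?)+

lemma Hess_eq: "Hess k x y z = 54*k^2*(x^3+y^3+(z-x-y)^3) - 54*(4-k^3)*x*y*(z-x-y)"
  unfolding Hess_def Let_def
  by (simp add: pdd numeral_2_eq_2[symmetric]) (simp add: algebra_simps power2_eq_square power3_eq_cube)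

lemma polar_eq: "polar k (a, b, 1) (x, y, 1) =
   a*((1-x-y)^2 - x^2 + k*y*(1-x-y) - k*x*y) + b*((1-x-y)^2 - y^2 + k*x*(1-x-y) - k*x*y)
   + (k*x*y - (1-x-y)^2)"
  unfolding polar_def by (simp add: pd0 pd1 pd2 algebra_simps)


definition Gc :: "real \<Rightarrow> real \<Rightarrow> real \<Rightarrow> real \<Rightarrow> real" where
  "Gc q a1 a2 a3 = a1^3 + a2^3 + a3^3 - 3*q*a1*a2*a3"
definition tA :: "real \<Rightarrow> real \<Rightarrow> real \<Rightarrow> real \<Rightarrow> real \<Rightarrow> real \<Rightarrow> real" where
  "tA x y w a1 a2 a3 = x^2*a1 + y^2*a2 + w^2*a3"
definition tB :: "real \<Rightarrow> real \<Rightarrow> real \<Rightarrow> real \<Rightarrow> real \<Rightarrow> real \<Rightarrow> real" where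
  "tB x y w a1 a2 a3 = y*w*a1 + x*w*a2 + x*y*a3"

lemma I1:
  fixes q x y w b1 b2 b3 :: real
  assumes rel: "x^3+y^3+w^3 = 3*q*x*y*w"
  defines "V1 \<equiv> x*(y^3-w^3)" and "V2 \<equiv> y*(w^3-x^3)" and "V3 \<equiv> w*(x^3-y^3)"
  shows "4*((V1^2 - q*V2*V3)*b1 + (V2^2 - q*V1*V3)*b2 + (V3^2 - q*V1*V2)*b3) * Gc q b1 b2 b3
     - 3*(V1*b1^2 + V2*b2^2 + V3*b3^2 - q*(V1*b2*b3 + V2*b1*b3 + V3*b1*b2))^2
     = (tA x y w b1 b2 b3 - q*tB x y w b1 b2 b3) * ((tA x y w b1 b2 b3)^3
        + 3*q*(tA x y w b1 b2 b3)^2*tB x y w b1 b2 b3 - 4*(tB x y w b1 b2 b3)^3)"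
  using rel unfolding V1_def V2_def V3_def Gc_def tA_def tB_def
  by algebra


lemma keyW1:
  fixes q k x y w a1 a2 a3 :: real
  assumes k1: "k > 1" and qdef: "q = (4-k^3)/(3*k^2)" and xp: "x > 0" and yp: "y > 0" and wn: "w < 0"
    and rel: "x^3+y^3+w^3 = 3*q*x*y*w"
    and h1: "tA x y w a1 a2 a3 - q * tB x y w a1 a2 a3 < 0"
    and h2: "tA x y w a1 a2 a3 - k * tB x y w a1 a2 a3 < 0"
  shows "Gc q a1 a2 a3 < 0"
proof (rule ccontr)
  assume "\<not> Gc q a1 a2 a3 < 0"
  hence G0: "Gc q a1 a2 a3 \<ge> 0" by simp
  define V1 where "V1 = x*(y^3-w^3)"
  define V2 where "V2 = y*(w^3-x^3)"
  define V3 where "V3 = w*(x^3-y^3)"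
  define tau where "tau b1 b2 b3 = (V1^2 - q*V2*V3)*b1 + (V2^2 - q*V1*V3)*b2 + (V3^2 - q*V1*V2)*b3" for b1 b2 b3
  define gv where "gv b1 b2 b3 = V1*b1^2 + V2*b2^2 + V3*b3^2 - q*(V1*b2*b3 + V2*b1*b3 + V3*b1*b2)" for b1 b2 b3
  have k0: "k > 0" using k1 by simp
  have id1: "4 * tau b1 b2 b3 * Gc q b1 b2 b3 - 3 * (gv b1 b2 b3)^2 =
     (tA x y w b1 b2 b3 - q * tB x y w b1 b2 b3) * ((tA x y w b1 b2 b3)^3
        + 3*q*(tA x y w b1 b2 b3)^2 * tB x y w b1 b2 b3 - 4*(tB x y w b1 b2 b3)^3)" for b1 b2 b3
    unfolding tau_def gv_def V1_def V2_def V3_def using I1[OF rel] by simp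
  have fac: "rr^3 + 3*q*rr^2*zz - 4*zz^3 = (rr - k*zz) * (rr^2 + 4/k^2*rr*zz + 4/k*zz^2)" for rr zz :: real
    using k0 unfolding qdef by (simp add: field_simps) algebra
  have psi: "rr^2 + 4/k^2*rr*zz + 4/k*zz^2 > 0" if "rr \<noteq> 0 \<or> zz \<noteq> 0" for rr zz :: real
  proof -
    have "k^2 * (rr^2 + 4/k^2*rr*zz + 4/k*zz^2) = (k*rr + 2/k*zz)^2 + (4*k - 4/k^2)*zz^2"
      using k0 by (simp add: field_simps) algebra
    moreover have "4*k - 4/k^2 > 0"
    proof -
      have "k^2 > 1" using k1 by (simp add: one_less_power)
      hence "4/k^2 < 4" by (simp add: divide_less_eq)
      thus ?thesis using k1 by linarith
    qed
    moreover have "(k*rr + 2/k*zz)^2 + (4*k - 4/k^2)*zz^2 > 0"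
    proof (cases "zz = 0")
      case True
      then have "rr \<noteq> 0" using that by simp
      then show ?thesis using True k0 by simp
    next
      case False
      then have "zz^2 > 0" by simp
      then show ?thesis using mult_pos_pos[OF \<open>4*k - 4/k^2 > 0\<close> \<open>zz^2 > 0\<close>]
        zero_le_power2[of "k*rr + 2/k*zz"] by linarith
    qed
    ultimately have "k^2 * (rr^2 + 4/k^2*rr*zz + 4/k*zz^2) > 0" by simp
    moreover have "k^2 > 0" using k0 by simp
    ultimately show ?thesis using zero_less_mult_pos by blast
  qed
  have posprod: "tau b1 b2 b3 * Gc q b1 b2 b3 > 0"
    if W1: "tA x y w b1 b2 b3 - q * tB x y w b1 b2 b3 < 0" "tA x y w b1 b2 b3 - k * tB x y w b1 b2 b3 < 0"
    for b1 b2 b3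
  proof -
    define rr where "rr = tA x y w b1 b2 b3"
    define zz where "zz = tB x y w b1 b2 b3"
    have uv: "rr - q*zz < 0" "rr - k*zz < 0" using W1 unfolding rr_def zz_def by auto
    have nz: "rr \<noteq> 0 \<or> zz \<noteq> 0" using uv by auto
    have "(rr - q*zz) * (rr^3 + 3*q*rr^2*zz - 4*zz^3) = ((rr - q*zz) * (rr - k*zz)) * (rr^2 + 4/k^2*rr*zz + 4/k*zz^2)"
      by (simp add: fac)
    also have "\<dots> > 0" using uv psi[OF nz] by (simp add: mult_neg_neg)
    finally have "(rr - q*zz) * (rr^3 + 3*q*rr^2*zz - 4*zz^3) > 0" .
    hence "4 * tau b1 b2 b3 * Gc q b1 b2 b3 - 3 * (gv b1 b2 b3)^2 > 0"
      using id1[of b1 b2 b3] unfolding rr_def zz_def by simp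
    moreover have "4 * tau b1 b2 b3 * Gc q b1 b2 b3 = 4 * (tau b1 b2 b3 * Gc q b1 b2 b3)" by simp
    moreover have "(gv b1 b2 b3)^2 \<ge> 0" by simp
    ultimately show ?thesis by linarith
  qed
  define n1 where "n1 = x*w*V3 - x*y*V2"
  define n2 where "n2 = x*y*V1 - y*w*V3"
  define n3 where "n3 = y*w*V2 - x*w*V1"
  define NV where "NV = V1^2 + V2^2 + V3^2"
  have tBn: "tB x y w (-n1) (-n2) (-n3) = 0"
    unfolding tB_def n1_def n2_def n3_def by algebra
  have tAn: "tA x y w (-n1) (-n2) (-n3) = - NV"
    unfolding tA_def n1_def n2_def n3_def NV_def V1_def V2_def V3_def
    by algebra
  have V1p: "V1 > 0"
  proof -
    have "y^3 > 0" using yp by simp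
    moreover have "w^3 < 0" using wn by simp
    ultimately have "y^3 - w^3 > 0" by linarith
    then show ?thesis unfolding V1_def using xp by simp
  qed
  have NVp: "NV > 0"
  proof -
    have "V1^2 > 0" using V1p by simp
    then show ?thesis unfolding NV_def using zero_le_power2[of V2] zero_le_power2[of V3] by linarith
  qed
  define p where "p = x*y*w"
  have pn: "p \<noteq> 0" unfolding p_def using xp yp wn by simp
  define S where "S = x^3+y^3+w^3"
  define e2 where "e2 = x^3*y^3 + y^3*w^3 + w^3*x^3"
  define e3 where "e3 = x^3*y^3*w^3"
  have id2: "3*p*tau b1 b2 b3 = p*(S^2-3*e2)*tA x y w b1 b2 b3 - (9*e3 - S*e2)*tB x y w b1 b2 b3" for b1 b2 b3
    using rel unfolding tau_def p_def S_def e2_def e3_def V1_def V2_def V3_def tA_def tB_def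
    by algebra
  have Sp: "S^2 - 3*e2 > 0"
  proof -
    have "2*(S^2 - 3*e2) = (x^3-y^3)^2 + (y^3-w^3)^2 + (w^3-x^3)^2"
      unfolding S_def e2_def by (simp add: algebra_simps power2_eq_square)
    moreover have "y^3 - w^3 > 0" using V1p xp unfolding V1_def by (simp add: zero_less_mult_iff)
    hence "(y^3 - w^3)^2 > 0" by simp
    ultimately have "2*(S^2 - 3*e2) > 0" using zero_le_power2[of "x^3-y^3"] zero_le_power2[of "w^3-x^3"] by linarith
    thus ?thesis by simp
  qed
  have taun: "tau (-n1) (-n2) (-n3) < 0"
  proof -
    have "p*(3*tau (-n1) (-n2) (-n3)) = p*((S^2-3*e2)*(-NV))"
      using id2[of "-n1" "-n2" "-n3"] tAn tBn by (simp add: algebra_simps)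
    hence "3*tau (-n1) (-n2) (-n3) = (S^2-3*e2)*(-NV)" by (simp only: mult_left_cancel[OF pn])
    moreover have "(S^2-3*e2)*(-NV) < 0" using Sp NVp by (simp add: mult_pos_neg)
    ultimately show ?thesis by simp
  qed
  have W1n: "tA x y w (-n1) (-n2) (-n3) - q * tB x y w (-n1) (-n2) (-n3) < 0"
            "tA x y w (-n1) (-n2) (-n3) - k * tB x y w (-n1) (-n2) (-n3) < 0"
    using tAn tBn NVp by auto
  have pA: "tau a1 a2 a3 * Gc q a1 a2 a3 > 0" using posprod[OF h1 h2] .
  have tauA: "tau a1 a2 a3 > 0"
  proof (rule ccontr)
    assume "\<not> tau a1 a2 a3 > 0"
    hence "tau a1 a2 a3 \<le> 0" by simp
    hence "tau a1 a2 a3 * Gc q a1 a2 a3 \<le> 0" using G0 by (rule mult_nonpos_nonneg)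
    thus False using pA by simp
  qed
  define th where "th = tau a1 a2 a3 / (tau a1 a2 a3 - tau (-n1) (-n2) (-n3))"
  have th01: "0 < th" "th < 1" unfolding th_def using tauA taun by (auto simp: field_simps)
  define c1 where "c1 = (1-th)*a1 + th*(-n1)"
  define c2 where "c2 = (1-th)*a2 + th*(-n2)"
  define c3 where "c3 = (1-th)*a3 + th*(-n3)"
  have lin: "tau c1 c2 c3 = (1-th)*tau a1 a2 a3 + th*tau (-n1) (-n2) (-n3)"
            "tA x y w c1 c2 c3 = (1-th)*tA x y w a1 a2 a3 + th*tA x y w (-n1) (-n2) (-n3)"
            "tB x y w c1 c2 c3 = (1-th)*tB x y w a1 a2 a3 + th*tB x y w (-n1) (-n2) (-n3)"
    unfolding tau_def tA_def tB_def c1_def c2_def c3_def by (simp_all add: algebra_simps)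
  have tau0: "tau c1 c2 c3 = 0"
    unfolding lin th_def using tauA taun by (simp add: field_simps)
  have "tA x y w c1 c2 c3 - q * tB x y w c1 c2 c3
     = (1-th)*(tA x y w a1 a2 a3 - q * tB x y w a1 a2 a3) + th*(tA x y w (-n1) (-n2) (-n3) - q * tB x y w (-n1) (-n2) (-n3))"
    unfolding lin by (simp add: algebra_simps)
  also have "\<dots> < 0"
  proof -
    have "(1-th)*(tA x y w a1 a2 a3 - q * tB x y w a1 a2 a3) < 0" using th01 h1 by (simp add: mult_pos_neg)
    moreover have "th*(tA x y w (-n1) (-n2) (-n3) - q * tB x y w (-n1) (-n2) (-n3)) < 0" using th01 W1n(1) by (simp add: mult_pos_neg)
    ultimately show ?thesis by linarith
  qed
  finally have c1n: "tA x y w c1 c2 c3 - q * tB x y w c1 c2 c3 < 0" .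
  have "tA x y w c1 c2 c3 - k * tB x y w c1 c2 c3
     = (1-th)*(tA x y w a1 a2 a3 - k * tB x y w a1 a2 a3) + th*(tA x y w (-n1) (-n2) (-n3) - k * tB x y w (-n1) (-n2) (-n3))"
    unfolding lin by (simp add: algebra_simps)
  also have "\<dots> < 0"
  proof -
    have "(1-th)*(tA x y w a1 a2 a3 - k * tB x y w a1 a2 a3) < 0" using th01 h2 by (simp add: mult_pos_neg)
    moreover have "th*(tA x y w (-n1) (-n2) (-n3) - k * tB x y w (-n1) (-n2) (-n3)) < 0" using th01 W1n(2) by (simp add: mult_pos_neg)
    ultimately show ?thesis by linarith
  qed
  finally have c2n: "tA x y w c1 c2 c3 - k * tB x y w c1 c2 c3 < 0" .
  have "tau c1 c2 c3 * Gc q c1 c2 c3 > 0" using posprod[OF c1n c2n] .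
  thus False using tau0 by simp
qed


definition kq :: "real \<Rightarrow> real" where "kq k = (4 - k^3)/(3*k^2)"
definition mk :: "real \<Rightarrow> real" where "mk k = 1 - kq k"
definition gk :: "real \<Rightarrow> real" where "gk k = ((mk k)^2 - 3*mk k + 3)/3"
definition l1 :: "real \<Rightarrow> real \<Rightarrow> real" where "l1 k x = mk k * x - 1"
definition l2 :: "real \<Rightarrow> real \<Rightarrow> real" where "l2 k y = mk k * y - 1"
definition l3 :: "real \<Rightarrow> real \<Rightarrow> real \<Rightarrow> real" where "l3 k x y = mk k * x + mk k * y + 1 - mk k"
definition Ureg :: "real \<Rightarrow> (real \<times> real) set" where
  "Ureg k = {p. 0 < l1 k (fst p) \<and> 0 < l2 k (snd p) \<and> 0 < l3 k (fst p) (snd p)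
                 \<and> gk k < l1 k (fst p) * l2 k (snd p) * l3 k (fst p) (snd p)}"

lemma mk_eq: "k \<noteq> 0 \<Longrightarrow> mk k = (k-1)*(k+2)^2/(3*k^2)"
  unfolding mk_def kq_def by (simp add: field_simps) algebra

lemma mk_pos: "k > 1 \<Longrightarrow> mk k > 0"
  by (simp add: mk_eq)

lemma gk_pos: "gk k > 0"
proof -
  have "(mk k)^2 - 3*mk k + 3 = (mk k - 3/2)^2 + 3/4" by (simp add: algebra_simps power2_eq_square)
  moreover have "(mk k - 3/2)^2 \<ge> 0" by simp
  ultimately have "(mk k)^2 - 3*mk k + 3 > 0" by linarith
  thus ?thesis unfolding gk_def by simp
qed

lemma Hess_Gc: "k \<noteq> 0 \<Longrightarrow> Hess k x y 1 = 54*k^2 * Gc (kq k) x y (1-x-y)"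
  unfolding Hess_eq Gc_def kq_def by (simp add: field_simps)

lemma Gc_l: assumes "k > 1"
  shows "Gc (kq k) x y (1-x-y) = 3/(mk k)^2 * (gk k - l1 k x * l2 k y * l3 k x y)"
proof -
  have m0: "mk k \<noteq> 0" using mk_pos[OF assms] by simp
  have q: "kq k = 1 - mk k" unfolding mk_def by simp
  show ?thesis unfolding q Gc_def gk_def l1_def l2_def l3_def using m0
    by (simp add: field_simps) algebra
qed

lemma Gc_f1: "Gc (1 - m) x y (1-x-y) = 3*(1-m*x)*y*(y+x-1) + (3*x^2-3*x+1)"
  unfolding Gc_def by algebra
lemma Gc_f2: "Gc (1 - m) x y (1-x-y) = 3*(1-m*y)*x*(x+y-1) + (3*y^2-3*y+1)"
  unfolding Gc_def by algebra

lemma quad_pos: "3*x^2 - 3*x + 1 > (0::real)"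
proof -
  have "3*x^2 - 3*x + 1 = 3*(x - 1/2)^2 + 1/4" by (simp add: algebra_simps power2_eq_square)
  moreover have "(x - 1/2)^2 \<ge> 0" by simp
  ultimately show ?thesis by linarith
qed

lemma C2_char: assumes k1: "k > 1"
  shows "(x, y) \<in> C2 k \<longleftrightarrow> 0 < l1 k x \<and> 0 < l2 k y \<and> l1 k x * l2 k y * l3 k x y = gk k"
proof -
  have m0: "mk k > 0" using mk_pos[OF k1] .
  have k0: "k \<noteq> 0" using k1 by simp
  have q: "kq k = 1 - mk k" unfolding mk_def by simp
  have H: "Hess k x y 1 = 0 \<longleftrightarrow> Gc (kq k) x y (1-x-y) = 0"
    using Hess_Gc[OF k0] k0 by simp
  have G: "Gc (kq k) x y (1-x-y) = 0 \<longleftrightarrow> l1 k x * l2 k y * l3 k x y = gk k"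
    using Gc_l[OF k1] m0 by auto
  show ?thesis
  proof
    assume "(x, y) \<in> C2 k"
    hence xy: "0 < x" "0 < y" "1 < x + y" "Gc (kq k) x y (1-x-y) = 0"
      unfolding C2_def using H by auto
    have "0 < l1 k x"
    proof (rule ccontr)
      assume "\<not> 0 < l1 k x"
      hence "1 - mk k * x \<ge> 0" unfolding l1_def by simp
      moreover have "y*(y+x-1) > 0" using xy by simp
      ultimately have "3*(1-mk k*x)*y*(y+x-1) \<ge> 0" by (simp add: mult.assoc)
      hence "Gc (kq k) x y (1-x-y) > 0" unfolding q Gc_f1 using quad_pos[of x] by linarith
      thus False using xy by simp
    qed
    moreover have "0 < l2 k y"
    proof (rule ccontr)
      assume "\<not> 0 < l2 k y"
      hence "1 - mk k * y \<ge> 0" unfolding l2_def by simp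
      moreover have "x*(x+y-1) > 0" using xy by simp
      ultimately have "3*(1-mk k*y)*x*(x+y-1) \<ge> 0" by (simp add: mult.assoc)
      hence "Gc (kq k) x y (1-x-y) > 0" unfolding q Gc_f2 using quad_pos[of y] by linarith
      thus False using xy by simp
    qed
    ultimately show "0 < l1 k x \<and> 0 < l2 k y \<and> l1 k x * l2 k y * l3 k x y = gk k" using xy G by simp
  next
    assume A: "0 < l1 k x \<and> 0 < l2 k y \<and> l1 k x * l2 k y * l3 k x y = gk k"
    hence G0: "Gc (kq k) x y (1-x-y) = 0" using G by simp
    have mx: "mk k * x > 1" "mk k * y > 1" using A unfolding l1_def l2_def by auto
    have xp: "x > 0"
    proof (rule ccontr)
      assume "\<not> x > 0"
      hence "mk k * x \<le> 0" using m0 by (simp add: mult_nonneg_nonpos)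
      thus False using mx(1) by linarith
    qed
    have yp: "y > 0"
    proof (rule ccontr)
      assume "\<not> y > 0"
      hence "mk k * y \<le> 0" using m0 by (simp add: mult_nonneg_nonpos)
      thus False using mx(2) by linarith
    qed
    have "3*(1-mk k*x)*y*(y+x-1) + (3*x^2-3*x+1) = 0" using G0 unfolding q Gc_f1 .
    hence "3*(mk k*x - 1)*(y*(y+x-1)) = 3*x^2-3*x+1" by (simp add: algebra_simps)
    hence "3*(mk k*x - 1)*(y*(y+x-1)) > 0" using quad_pos[of x] by simp
    moreover have "3*(mk k*x - 1) > 0" using mx by simp
    ultimately have "y*(y+x-1) > 0" using zero_less_mult_pos by blast
    hence "y+x-1 > 0" using yp zero_less_mult_pos by blast
    thus "(x, y) \<in> C2 k" unfolding C2_def using xp yp H G0 by auto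
  qed
qed


lemma Ureg_C2_disj: "k > 1 \<Longrightarrow> Ureg k \<inter> C2 k = {}"
  unfolding Ureg_def by (auto simp: C2_char)

lemma Ureg_mono:
  assumes k1: "k > 1" and p: "p \<in> Ureg k" and le: "fst p \<le> fst r" "snd p \<le> snd r"
  shows "r \<in> Ureg k"
proof -
  have m0: "mk k > 0" using mk_pos[OF k1] .
  have a: "l1 k (fst p) \<le> l1 k (fst r)" "l2 k (snd p) \<le> l2 k (snd r)"
          "l3 k (fst p) (snd p) \<le> l3 k (fst r) (snd r)"
    unfolding l1_def l2_def l3_def using le m0 by (auto intro: mult_left_mono add_mono)
  have b: "0 < l1 k (fst p)" "0 < l2 k (snd p)" "0 < l3 k (fst p) (snd p)"
      and c: "gk k < l1 k (fst p) * l2 k (snd p) * l3 k (fst p) (snd p)"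
    using p unfolding Ureg_def by auto
  have "l1 k (fst p) * l2 k (snd p) \<le> l1 k (fst r) * l2 k (snd r)"
    using a b by (intro mult_mono) auto
  hence "l1 k (fst p) * l2 k (snd p) * l3 k (fst p) (snd p) \<le> l1 k (fst r) * l2 k (snd r) * l3 k (fst r) (snd r)"
    using a b by (intro mult_mono) auto
  thus ?thesis using a b c unfolding Ureg_def by auto
qed

lemma big_in_Ureg:
  assumes k1: "k > 1" and N: "N \<ge> (2 + gk k)/mk k + 1"
  shows "(N, N) \<in> Ureg k"
proof -
  have m0: "mk k > 0" using mk_pos[OF k1] .
  have g0: "gk k > 0" by (rule gk_pos)
  have "mk k * N \<ge> mk k * ((2 + gk k)/mk k + 1)" using N m0 by (simp add: mult_left_mono)
  moreover have "mk k * ((2 + gk k)/mk k + 1) = 2 + gk k + mk k" using m0 by (simp add: field_simps)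
  ultimately have mN: "mk k * N \<ge> 2 + gk k + mk k" by simp
  have L1: "l1 k N \<ge> 1 + gk k" "l2 k N \<ge> 1 + gk k" unfolding l1_def l2_def using mN m0 by auto
  have L3: "l3 k N N \<ge> 1" unfolding l3_def using mN m0 g0 by linarith
  have "(1 + gk k) * (1 + gk k) \<le> l1 k N * l2 k N" using L1 g0 by (intro mult_mono) auto
  moreover have "0 \<le> l1 k N * l2 k N" using L1 g0 by (intro mult_nonneg_nonneg) linarith+
  ultimately have "(1 + gk k) * (1 + gk k) * 1 \<le> l1 k N * l2 k N * l3 k N N" using L3
    by (rule_tac mult_mono) auto
  moreover have "gk k < (1 + gk k) * (1 + gk k) * 1" using g0 by (simp add: algebra_simps power2_eq_square)
    (smt (verit) mult_pos_pos)
  ultimately show ?thesis unfolding Ureg_def using L1 L3 g0 by auto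
qed

lemma open_Ureg: "open (Ureg k)"
  unfolding Ureg_def l1_def l2_def l3_def
  by (intro open_Collect_conj open_Collect_less continuous_intros)

lemma Kint_eq: assumes k1: "k > 1" shows "Kint k = Ureg k"
proof
  show "Ureg k \<subseteq> Kint k"
  proof
    fix q assume q: "q \<in> Ureg k"
    show "q \<in> Kint k" unfolding Kint_def
    proof (intro CollectI exI allI impI)
      fix x y assume xy: "max (fst q) (snd q) \<le> x \<and> max (fst q) (snd q) \<le> y"
      have seg: "closed_segment q (x, y) \<subseteq> Ureg k"
      proof
        fix z assume "z \<in> closed_segment q (x, y)"
        then obtain u where u: "0 \<le> u" "u \<le> 1" "z = (1 - u) *\<^sub>R q + u *\<^sub>R (x, y)"
          unfolding closed_segment_def by auto
        have "fst q \<le> fst z"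
        proof -
          have "fst z = (1-u) * fst q + u * x" using u by simp
          moreover have "u * fst q \<le> u * x" using xy u by (intro mult_left_mono) auto
          ultimately show ?thesis by (simp add: algebra_simps)
        qed
        moreover have "snd q \<le> snd z"
        proof -
          have "snd z = (1-u) * snd q + u * y" using u by simp
          moreover have "u * snd q \<le> u * y" using xy u by (intro mult_left_mono) auto
          ultimately show ?thesis by (simp add: algebra_simps)
        qed
        ultimately show "z \<in> Ureg k" using Ureg_mono[OF k1 q] by auto
      qed
      show "connected_component (- C2 k) q (x, y)"
        unfolding connected_component_def
        using seg Ureg_C2_disj[OF k1]
        by (intro exI[of _ "closed_segment q (x, y)"]) auto
    qed
  qed
next
  show "Kint k \<subseteq> Ureg k"
  proof
    fix q assume "q \<in> Kint k"
    then obtain N where N: "\<forall>x y. N \<le> x \<and> N \<le> y \<longrightarrow> connected_component (- C2 k) q (x, y)"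
      unfolding Kint_def by auto
    define M where "M = max N ((2 + gk k)/mk k + 1)"
    have MU: "(M, M) \<in> Ureg k" using big_in_Ureg[OF k1] unfolding M_def by auto
    have "connected_component (- C2 k) q (M, M)" using N unfolding M_def by auto
    then obtain T where T: "connected T" "T \<subseteq> - C2 k" "q \<in> T" "(M, M) \<in> T"
      unfolding connected_component_def by auto
    define F where "F = {p. 0 \<le> l1 k (fst p) \<and> 0 \<le> l2 k (snd p) \<and> 0 \<le> l3 k (fst p) (snd p)
                 \<and> gk k \<le> l1 k (fst p) * l2 k (snd p) * l3 k (fst p) (snd p)}"
    have cF: "closed F" unfolding F_def l1_def l2_def l3_def
      by (intro closed_Collect_conj closed_Collect_le continuous_intros)
    have UF: "Ureg k \<subseteq> F" unfolding Ureg_def F_def by auto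
    have cover: "T \<subseteq> Ureg k \<union> - F"
    proof
      fix z assume zT: "z \<in> T"
      show "z \<in> Ureg k \<union> - F"
      proof (rule ccontr)
        assume "z \<notin> Ureg k \<union> - F"
        hence zF: "z \<in> F" "z \<notin> Ureg k" by auto
        have g0: "gk k > 0" by (rule gk_pos)
        have nz: "l1 k (fst z) \<noteq> 0" "l2 k (snd z) \<noteq> 0" "l3 k (fst z) (snd z) \<noteq> 0"
          using zF(1) g0 unfolding F_def by auto
        hence pos: "0 < l1 k (fst z)" "0 < l2 k (snd z)" "0 < l3 k (fst z) (snd z)"
          using zF(1) unfolding F_def by auto
        hence "l1 k (fst z) * l2 k (snd z) * l3 k (fst z) (snd z) = gk k"
          using zF unfolding F_def Ureg_def by auto
        hence "z \<in> C2 k" using pos C2_char[OF k1, of "fst z" "snd z"] by auto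
        thus False using zT T(2) by auto
      qed
    qed
    have "Ureg k \<inter> T = {} \<or> - F \<inter> T = {}"
      by (rule connectedD[OF T(1) open_Ureg]) (use cF UF cover in \<open>auto simp: open_Compl\<close>)
    hence "- F \<inter> T = {}" using MU T(4) by auto
    hence "q \<in> F" using T(3) by auto
    moreover have "q \<notin> C2 k" using T(2,3) by auto
    ultimately show "q \<in> Ureg k" using cover T(3) by auto
  qed
qed


lemma amgm3:
  fixes r1 r2 r3 :: real
  assumes p: "r1 > 0" "r2 > 0" "r3 > 0" and g: "r1*r2*r3 > 1"
  shows "r1 + r2 + r3 > 3"
proof -
  define c1 where "c1 = root 3 r1"
  define c2 where "c2 = root 3 r2"
  define c3 where "c3 = root 3 r3"
  have cp: "c1 > 0" "c2 > 0" "c3 > 0" unfolding c1_def c2_def c3_def using p by (auto intro: real_root_gt_zero)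
  have cc: "c1^3 = r1" "c2^3 = r2" "c3^3 = r3" unfolding c1_def c2_def c3_def using p by auto
  have "c1*c2*c3 = root 3 (r1*r2*r3)" unfolding c1_def c2_def c3_def by (simp add: real_root_mult)
  moreover have "root 3 1 < root 3 (r1*r2*r3)" using g by simp
  ultimately have c1: "c1*c2*c3 > 1" by simp
  have id: "2*(c1^3 + c2^3 + c3^3 - 3*(c1*c2*c3)) = (c1+c2+c3)*((c1-c2)^2+(c2-c3)^2+(c3-c1)^2)"
    by algebra
  have "(c1+c2+c3)*((c1-c2)^2+(c2-c3)^2+(c3-c1)^2) \<ge> 0" using cp by simp
  hence "2*(c1^3 + c2^3 + c3^3 - 3*(c1*c2*c3)) \<ge> 0" by (simp only: id)
  hence "c1^3 + c2^3 + c3^3 \<ge> 3*(c1*c2*c3)" by (smt (verit))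
  thus ?thesis using cc c1 by linarith
qed

lemma Tl: assumes k1: "k > 1"
  shows "tA x y (1-x-y) z1 z2 (1-z1-z2) - kq k * tB x y (1-x-y) z1 z2 (1-z1-z2)
     = 1/(mk k)^2 * (3*gk k - (l1 k z1 * l2 k y * l3 k x y + l1 k x * l2 k z2 * l3 k x y + l1 k x * l2 k y * l3 k z1 z2))"
proof -
  have m0: "mk k \<noteq> 0" using mk_pos[OF k1] by simp
  have q: "kq k = 1 - mk k" unfolding mk_def by simp
  show ?thesis unfolding q tA_def tB_def gk_def l1_def l2_def l3_def using m0
    by (simp add: field_simps) algebra
qed

lemma phi_D: "tA x y w x y w - q * tB x y w x y w = Gc q x y w"
  unfolding tA_def tB_def Gc_def by algebra

lemma C2_Gc: "k > 1 \<Longrightarrow> (x, y) \<in> C2 k \<Longrightarrow> Gc (kq k) x y (1-x-y) = 0"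
  unfolding C2_def using Hess_Gc[of k x y] by auto

lemma U_phi_neg:
  assumes k1: "k > 1" and D: "(x, y) \<in> C2 k" and z: "(z1, z2) \<in> Ureg k"
  shows "tA x y (1-x-y) z1 z2 (1-z1-z2) - kq k * tB x y (1-x-y) z1 z2 (1-z1-z2) < 0"
proof -
  have m0: "mk k > 0" using mk_pos[OF k1] .
  have g0: "gk k > 0" by (rule gk_pos)
  have Dl: "0 < l1 k x" "0 < l2 k y" "l1 k x * l2 k y * l3 k x y = gk k" using D C2_char[OF k1] by auto
  have D3: "0 < l3 k x y"
  proof -
    have "0 < l1 k x * l2 k y" using Dl by simp
    moreover have "0 < l1 k x * l2 k y * l3 k x y" using Dl g0 by simp
    ultimately show ?thesis using zero_less_mult_pos by (metis mult.commute)
  qed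
  have zl: "0 < l1 k z1" "0 < l2 k z2" "0 < l3 k z1 z2" "gk k < l1 k z1 * l2 k z2 * l3 k z1 z2"
    using z unfolding Ureg_def by auto
  define r1 where "r1 = l1 k z1 / l1 k x"
  define r2 where "r2 = l2 k z2 / l2 k y"
  define r3 where "r3 = l3 k z1 z2 / l3 k x y"
  have rp: "r1 > 0" "r2 > 0" "r3 > 0" unfolding r1_def r2_def r3_def using zl Dl D3 by auto
  have "r1*r2*r3 = (l1 k z1 * l2 k z2 * l3 k z1 z2) / gk k"
    unfolding r1_def r2_def r3_def Dl(3)[symmetric] by (simp add: field_simps)
  hence "r1*r2*r3 > 1" using zl(4) g0 by simp
  hence S3: "r1 + r2 + r3 > 3" using amgm3 rp by blast
  have "l1 k z1 * l2 k y * l3 k x y + l1 k x * l2 k z2 * l3 k x y + l1 k x * l2 k y * l3 k z1 z2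
      = gk k * (r1 + r2 + r3)"
    unfolding r1_def r2_def r3_def Dl(3)[symmetric] using Dl D3 g0 by (simp add: field_simps)
  also have "\<dots> > gk k * 3" using S3 g0 by simp
  finally have B: "3*gk k - (l1 k z1 * l2 k y * l3 k x y + l1 k x * l2 k z2 * l3 k x y + l1 k x * l2 k y * l3 k z1 z2) < 0"
    by simp
  have A: "1/(mk k)^2 > 0" using m0 by simp
  show ?thesis unfolding Tl[OF k1] by (rule mult_pos_neg[OF A B])
qed

lemma vis_T:
  assumes k1: "k > 1" and D: "(x, y) \<in> C2 k"
    and T: "tA x y (1-x-y) a b (1-a-b) - kq k * tB x y (1-x-y) a b (1-a-b) \<ge> 0"
  shows "visible k (a, b) (x, y)"
proof -
  define phi where "phi z1 z2 = tA x y (1-x-y) z1 z2 (1-z1-z2) - kq k * tB x y (1-x-y) z1 z2 (1-z1-z2)" for z1 z2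
  have aff: "phi ((1-u)*a + u*x) ((1-u)*b + u*y) = (1-u)*phi a b + u*phi x y" for u
    unfolding phi_def tA_def tB_def by (simp add: algebra_simps)
  have pD: "phi x y = 0" unfolding phi_def using phi_D[of x y "1-x-y" "kq k"] C2_Gc[OF k1 D] by simp
  show ?thesis unfolding visible_def Kint_eq[OF k1]
  proof (rule ccontr)
    assume "closed_segment (a, b) (x, y) \<inter> Ureg k \<noteq> {}"
    then obtain z where zs: "z \<in> closed_segment (a, b) (x, y)" and zU: "z \<in> Ureg k" by auto
    obtain u where u: "0 \<le> u" "u \<le> 1" "z = (1 - u) *\<^sub>R (a, b) + u *\<^sub>R (x, y)"
      using zs unfolding closed_segment_def by auto
    have z: "z = ((1-u)*a + u*x, (1-u)*b + u*y)" using u by simp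
    have "phi ((1-u)*a + u*x) ((1-u)*b + u*y) < 0"
      using U_phi_neg[OF k1 D, of "(1-u)*a + u*x" "(1-u)*b + u*y"] zU z unfolding phi_def by simp
    moreover have "phi ((1-u)*a + u*x) ((1-u)*b + u*y) \<ge> 0"
      unfolding aff pD using u T unfolding phi_def by simp
    ultimately show False by simp
  qed
qed

lemma notvis_T:
  assumes k1: "k > 1" and D: "(x, y) \<in> C2 k"
    and T: "tA x y (1-x-y) a b (1-a-b) - kq k * tB x y (1-x-y) a b (1-a-b) < 0"
  shows "\<not> visible k (a, b) (x, y)"
proof -
  define q where "q = kq k"
  have m0: "mk k > 0" using mk_pos[OF k1] .
  have Dl: "0 < l1 k x" "0 < l2 k y" "l1 k x * l2 k y * l3 k x y = gk k" using D C2_char[OF k1] by auto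
  have D3: "0 < l3 k x y"
  proof -
    have "0 < l1 k x * l2 k y" using Dl by simp
    moreover have "0 < l1 k x * l2 k y * l3 k x y" using Dl gk_pos by simp
    ultimately show ?thesis using zero_less_mult_pos by (metis mult.commute)
  qed
  define h where "h t = Gc q (x + t*(a-x)) (y + t*(b-y)) (1 - (x + t*(a-x)) - (y + t*(b-y)))" for t
  have G0: "Gc q x y (1-x-y) = 0" using C2_Gc[OF k1 D] unfolding q_def .
  have dh: "DERIV h 0 :> 3*(tA x y (1-x-y) a b (1-a-b) - q * tB x y (1-x-y) a b (1-a-b)) - 3 * Gc q x y (1-x-y)"
    unfolding h_def Gc_def
    apply (rule derivative_eq_intros refl | simp)+
    unfolding tA_def tB_def by algebra
  hence dh': "DERIV h 0 :> 3*(tA x y (1-x-y) a b (1-a-b) - q * tB x y (1-x-y) a b (1-a-b))"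
    using G0 by simp
  have h0: "h 0 = 0" unfolding h_def using G0 by simp
  obtain d where d: "d > 0" "\<forall>t>0. t < d \<longrightarrow> h (0 + t) < h 0"
    using DERIV_neg_dec_right[OF dh'] T unfolding q_def by auto
  have ev1: "eventually (\<lambda>t. h t < 0) (at_right (0::real))"
    unfolding eventually_at_right_field using d h0 by (intro exI[of _ d]) auto
  have ev2: "eventually (\<lambda>t. 0 < l1 k (x + t*(a-x))) (at_right (0::real))"
  proof -
    have "((\<lambda>t. l1 k (x + t*(a-x))) \<longlongrightarrow> l1 k (x + 0*(a-x))) (at_right (0::real))"
      unfolding l1_def by (intro tendsto_intros)
    thus ?thesis using Dl(1) by (intro order_tendstoD(1)) auto
  qed
  have ev3: "eventually (\<lambda>t. 0 < l2 k (y + t*(b-y))) (at_right (0::real))"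
  proof -
    have "((\<lambda>t. l2 k (y + t*(b-y))) \<longlongrightarrow> l2 k (y + 0*(b-y))) (at_right (0::real))"
      unfolding l2_def by (intro tendsto_intros)
    thus ?thesis using Dl(2) by (intro order_tendstoD(1)) auto
  qed
  have ev4: "eventually (\<lambda>t. 0 < l3 k (x + t*(a-x)) (y + t*(b-y))) (at_right (0::real))"
  proof -
    have "((\<lambda>t. l3 k (x + t*(a-x)) (y + t*(b-y))) \<longlongrightarrow> l3 k (x + 0*(a-x)) (y + 0*(b-y))) (at_right (0::real))"
      unfolding l3_def by (intro tendsto_intros)
    thus ?thesis using D3 by (intro order_tendstoD(1)) auto
  qed
  have ev5: "eventually (\<lambda>t. 0 < t \<and> t < (1::real)) (at_right 0)"
    unfolding eventually_at_right_field by (intro exI[of _ 1]) auto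
  have "eventually (\<lambda>t. (h t < 0 \<and> 0 < l1 k (x + t*(a-x))) \<and> (0 < l2 k (y + t*(b-y))
       \<and> 0 < l3 k (x + t*(a-x)) (y + t*(b-y))) \<and> (0 < t \<and> t < 1)) (at_right (0::real))"
    by (intro eventually_conj ev1 ev2 ev3 ev4 ev5)
  then obtain t where t: "h t < 0" "0 < l1 k (x + t*(a-x))" "0 < l2 k (y + t*(b-y))"
     "0 < l3 k (x + t*(a-x)) (y + t*(b-y))" "0 < t" "t < 1"
    using eventually_happens[of _ "at_right (0::real)"] by auto
  define z where "z = (x + t*(a-x), y + t*(b-y))"
  have "Gc (kq k) (x + t*(a-x)) (y + t*(b-y)) (1 - (x + t*(a-x)) - (y + t*(b-y))) < 0"
    using t(1) unfolding h_def q_def .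
  hence "3/(mk k)^2 * (gk k - l1 k (x + t*(a-x)) * l2 k (y + t*(b-y)) * l3 k (x + t*(a-x)) (y + t*(b-y))) < 0"
    unfolding Gc_l[OF k1] .
  hence "0 < 3/(mk k)^2 \<and> gk k - l1 k (x + t*(a-x)) * l2 k (y + t*(b-y)) * l3 k (x + t*(a-x)) (y + t*(b-y)) < 0
     \<or> 3/(mk k)^2 < 0 \<and> 0 < gk k - l1 k (x + t*(a-x)) * l2 k (y + t*(b-y)) * l3 k (x + t*(a-x)) (y + t*(b-y))"
    by (simp only: mult_less_0_iff)
  moreover have "3/(mk k)^2 > 0" using m0 by simp
  ultimately have "gk k - l1 k (x + t*(a-x)) * l2 k (y + t*(b-y)) * l3 k (x + t*(a-x)) (y + t*(b-y)) < 0"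
    by linarith
  hence zU: "z \<in> Ureg k" unfolding Ureg_def z_def using t by auto
  have "z = (1 - (1-t)) *\<^sub>R (a, b) + (1-t) *\<^sub>R (x, y)" unfolding z_def by (simp add: algebra_simps)
  hence "z \<in> closed_segment (a, b) (x, y)" unfolding closed_segment_def using t by (intro CollectI exI[of _ "1-t"]) auto
  thus ?thesis unfolding visible_def Kint_eq[OF k1] using zU by auto
qed


definition Rf :: "real \<Rightarrow> real \<Rightarrow> real" where
  "Rf k x = (3*x^2 - 3*x + 1)/(3*(mk k * x - 1))"
definition gf :: "real \<Rightarrow> real \<Rightarrow> real" where
  "gf k x = (1 - x + sqrt((x-1)^2 + 4*Rf k x))/2"

lemma Rf_pos: "mk k * x > 1 \<Longrightarrow> Rf k x > 0"
  unfolding Rf_def using quad_pos[of x] by simp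

lemma gf_props:
  assumes mx: "mk k * x > 1"
  shows "(gf k x)^2 + (x-1)*gf k x = Rf k x" "gf k x > 0" "gf k x + x - 1 > 0"
proof -
  define d where "d = (x-1)^2 + 4*Rf k x"
  define s where "s = sqrt d"
  have R: "Rf k x > 0" using Rf_pos[OF mx] .
  have d0: "d > (x-1)^2" unfolding d_def using R by simp
  hence "d \<ge> 0" by (smt (verit) zero_le_power2)
  hence s2: "s^2 = d" unfolding s_def by simp
  have sg: "s > \<bar>x-1\<bar>" unfolding s_def using real_less_rsqrt[of "\<bar>x-1\<bar>" d] d0 by simp
  have g: "gf k x = (1 - x + s)/2" unfolding gf_def s_def d_def by simp
  show "(gf k x)^2 + (x-1)*gf k x = Rf k x"
  proof -
    have "(gf k x)^2 + (x-1)*gf k x = (s^2 - (x-1)^2)/4" unfolding g by (simp add: field_simps power2_eq_square)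
    also have "\<dots> = Rf k x" unfolding s2 d_def by simp
    finally show ?thesis .
  qed
  have s1: "x - 1 < s" using abs_ge_self[of "x-1"] sg by (rule le_less_trans)
  have s2: "1 - x < s" using abs_ge_minus_self[of "x-1"] sg by simp
  show "gf k x > 0" unfolding g using s1 by simp
  show "gf k x + x - 1 > 0" unfolding g using s2 by (simp add: field_simps)
qed

lemma gf_C2:
  assumes k1: "k > 1" and mx: "mk k * x > 1"
  shows "(x, gf k x) \<in> C2 k"
proof -
  have m0: "mk k > 0" using mk_pos[OF k1] .
  have xp: "x > 0"
  proof (rule ccontr)
    assume "\<not> x > 0"
    hence "mk k * x \<le> 0" using m0 by (simp add: mult_nonneg_nonpos)
    thus False using mx by linarith
  qed
  note gp = gf_props[OF mx]
  have q: "kq k = 1 - mk k" unfolding mk_def by simp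
  have "Gc (kq k) x (gf k x) (1 - x - gf k x) = 3*(1-mk k*x)*(gf k x*(gf k x+x-1)) + (3*x^2-3*x+1)"
    unfolding q Gc_f1 by (simp add: mult.assoc)
  also have "gf k x*(gf k x+x-1) = Rf k x" using gp(1) by (simp add: algebra_simps power2_eq_square)
  also have "3*(1-mk k*x)*Rf k x + (3*x^2-3*x+1) = 0"
    unfolding Rf_def using mx by (simp add: field_simps)
  finally have G0: "Gc (kq k) x (gf k x) (1 - x - gf k x) = 0" .
  have "Hess k x (gf k x) 1 = 0" using Hess_Gc[of k x "gf k x"] k1 G0 by simp
  thus ?thesis unfolding C2_def using xp gp by auto
qed

lemma C2_gf:
  assumes k1: "k > 1" and D: "(x, y) \<in> C2 k"
  shows "mk k * x > 1" "y = gf k x"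
proof -
  have l: "0 < l1 k x" using D C2_char[OF k1] by auto
  thus mx: "mk k * x > 1" unfolding l1_def by simp
  have reg: "0 < y" "1 < x + y" using D unfolding C2_def by auto
  have q: "kq k = 1 - mk k" unfolding mk_def by simp
  have "3*(1-mk k*x)*(y*(y+x-1)) + (3*x^2-3*x+1) = 0"
    using C2_Gc[OF k1 D] unfolding q Gc_f1 by (simp add: mult.assoc)
  hence yq: "y*(y+x-1) = Rf k x" unfolding Rf_def using mx by (simp add: field_simps)
  have "(2*y + x - 1)^2 = (x-1)^2 + 4*Rf k x" unfolding yq[symmetric] by (simp add: algebra_simps power2_eq_square)
  hence "sqrt ((x-1)^2 + 4*Rf k x) = 2*y + x - 1" using reg by (intro real_sqrt_unique) auto
  thus "y = gf k x" unfolding gf_def by simp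
qed

lemma gf_cont: "continuous_on {x. mk k * x > 1} (gf k)"
  unfolding gf_def Rf_def
  by (intro continuous_intros) auto

lemma inv_lim: "((\<lambda>x::real. inverse x) \<longlongrightarrow> 0) at_top"
  by (rule tendsto_inverse_0_at_top[OF filterlim_ident])

lemma gf_lim:
  assumes k1: "k > 1"
  shows "(gf k \<longlongrightarrow> 1 / mk k) at_top"
proof -
  define m where "m = mk k"
  have m0: "m > 0" unfolding m_def using mk_pos[OF k1] .
  define U where "U x = Rf k x / (x - 1)" for x
  define L where "L x = Rf k x / (U x + x - 1)" for x
  have ev: "eventually (\<lambda>x. x > max 1 (1/m) + 1) at_top" by (rule eventually_gt_at_top)
  have evx: "eventually (\<lambda>x. x > 1 \<and> m * x > 1 \<and> x \<noteq> 0) at_top"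
    using ev
  proof (rule eventually_mono)
    fix x assume x: "x > max 1 (1/m) + 1"
    hence "x > 1/m" by simp
    hence "m * x > 1" using m0 by (simp add: field_simps)
    thus "x > 1 \<and> m * x > 1 \<and> x \<noteq> 0" using x by auto
  qed
  have bounds: "L x \<le> gf k x \<and> gf k x \<le> U x" if x: "x > 1" "m * x > 1" for x
  proof -
    have mx: "mk k * x > 1" using x(2) unfolding m_def by simp
    note gp = gf_props[OF mx]
    have R: "Rf k x > 0" using Rf_pos[OF mx] .
    have yq: "gf k x = Rf k x / (gf k x + x - 1)"
      using gp by (simp add: field_simps power2_eq_square algebra_simps)
    have up: "gf k x \<le> U x"
    proof -
      have "Rf k x / (gf k x + x - 1) \<le> Rf k x / (x - 1)"
        using gp R x by (intro divide_left_mono) auto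
      thus ?thesis using yq unfolding U_def by simp
    qed
    have "Rf k x / (U x + x - 1) \<le> Rf k x / (gf k x + x - 1)"
      using gp R up by (intro divide_left_mono) (auto simp: mult_pos_pos)
    thus ?thesis using up yq unfolding L_def by simp
  qed
  have limU: "(U \<longlongrightarrow> 1/m) at_top"
  proof -
    have e: "eventually (\<lambda>x. (3 - 3*inverse x + (inverse x)^2)/(3*(m - inverse x)*(1 - inverse x)) = U x) at_top"
      using evx
    proof (rule eventually_mono)
      fix x assume x: "x > 1 \<and> m * x > 1 \<and> x \<noteq> 0"
      hence nz: "m*x - 1 \<noteq> 0" "x - 1 \<noteq> 0" by auto
      have "inverse x < 1" using x by (simp add: inverse_less_1_iff)
      hence nz2: "1 - inverse x \<noteq> 0" by linarith
      have "inverse x < m" using x by (simp add: inverse_eq_divide field_simps)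
      hence nz3: "m - inverse x \<noteq> 0" by simp
      have x0: "x \<noteq> 0" using x by simp
      have num: "3 - 3*inverse x + (inverse x)^2 = (3*x^2 - 3*x + 1)/x^2"
        using x0 by (simp add: field_simps power2_eq_square)
      have den: "3*(m - inverse x)*(1 - inverse x) = 3*(m*x - 1)*(x - 1)/x^2"
        using x0 by (simp add: field_simps power2_eq_square)
      have "(3 - 3*inverse x + (inverse x)^2)/(3*(m - inverse x)*(1 - inverse x))
          = (3*x^2 - 3*x + 1)/(3*(m*x - 1)*(x - 1))"
        unfolding num den using x0 by simp
      also have "\<dots> = U x" unfolding U_def Rf_def m_def[symmetric] by simp
      finally show "(3 - 3*inverse x + (inverse x)^2)/(3*(m - inverse x)*(1 - inverse x)) = U x" .
    qed
    have "((\<lambda>x. (3 - 3*inverse x + (inverse x)^2)/(3*(m - inverse x)*(1 - inverse x))) \<longlongrightarrow>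
          (3 - 3*0 + 0^2)/(3*(m - 0)*(1 - 0))) at_top"
      using m0 by (intro tendsto_intros inv_lim) auto
    hence "((\<lambda>x. (3 - 3*inverse x + (inverse x)^2)/(3*(m - inverse x)*(1 - inverse x))) \<longlongrightarrow> 1/m) at_top"
      using m0 by simp
    thus ?thesis using e by (rule Lim_transform_eventually)
  qed
  have limL: "(L \<longlongrightarrow> 1/m) at_top"
  proof -
    have e: "eventually (\<lambda>x. ((3 - 3*inverse x + (inverse x)^2)/(3*(m - inverse x))) / (U x * inverse x + 1 - inverse x) = L x) at_top"
      using evx
    proof (rule eventually_mono)
      fix x assume x: "x > 1 \<and> m * x > 1 \<and> x \<noteq> 0"
      hence nz: "m*x - 1 \<noteq> 0" "x - 1 \<noteq> 0" by auto
      have "inverse x < 1" using x by (simp add: inverse_less_1_iff)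
      hence nz2: "1 - inverse x \<noteq> 0" by linarith
      have "inverse x < m" using x by (simp add: inverse_eq_divide field_simps)
      hence nz3: "m - inverse x \<noteq> 0" by simp
      have x0: "x \<noteq> 0" using x by simp
      have num: "3 - 3*inverse x + (inverse x)^2 = (3*x^2 - 3*x + 1)/x^2"
        using x0 by (simp add: field_simps power2_eq_square)
      have a1: "(3 - 3*inverse x + (inverse x)^2)/(3*(m - inverse x)) = Rf k x / x"
      proof -
        have den: "3*(m - inverse x) = 3*(m*x - 1)/x" using x0 by (simp add: field_simps)
        show ?thesis unfolding num den Rf_def m_def[symmetric] using x0
          by (simp add: power2_eq_square)
      qed
      have a2: "U x * inverse x + 1 - inverse x = (U x + x - 1)/x"
        using x0 by (simp add: field_simps)
      show "((3 - 3*inverse x + (inverse x)^2)/(3*(m - inverse x))) / (U x * inverse x + 1 - inverse x) = L x"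
        unfolding a1 a2 L_def using x0 by simp
    qed
    have "((\<lambda>x. ((3 - 3*inverse x + (inverse x)^2)/(3*(m - inverse x))) / (U x * inverse x + 1 - inverse x)) \<longlongrightarrow>
          ((3 - 3*0 + 0^2)/(3*(m - 0))) / (1/m * 0 + 1 - 0)) at_top"
      using m0 by (intro tendsto_intros inv_lim limU) auto
    hence "((\<lambda>x. ((3 - 3*inverse x + (inverse x)^2)/(3*(m - inverse x))) / (U x * inverse x + 1 - inverse x)) \<longlongrightarrow> 1/m) at_top"
      using m0 by simp
    thus ?thesis using e by (rule Lim_transform_eventually)
  qed
  have "eventually (\<lambda>x. L x \<le> gf k x) at_top" using evx by (rule eventually_mono) (use bounds in auto)
  moreover have "eventually (\<lambda>x. gf k x \<le> U x) at_top" using evx by (rule eventually_mono) (use bounds in auto)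
  ultimately have "(gf k \<longlongrightarrow> 1/m) at_top" using limL limU by (rule tendsto_sandwich)
  thus ?thesis unfolding m_def .
qed


lemma tAB_expand:
  "tA x y (1-x-y) a b (1-a-b) - t * tB x y (1-x-y) a b (1-a-b)
   = x^2 * (1 + (t-1)*b)
     + x * (-2*(1-a-b)*(1-y) + t*a*y - t*b*(1-y) - t*(1-a-b)*y)
     + (b*y^2 + (1-a-b)*(1-y)^2 - t*a*y*(1-y))"
  unfolding tA_def tB_def by algebra

lemma tail_lim:
  assumes k1: "k > 1"
  shows "((\<lambda>x. (tA x (gf k x) (1-x-gf k x) a b (1-a-b) - t * tB x (gf k x) (1-x-gf k x) a b (1-a-b)) / x^2)
          \<longlongrightarrow> 1 + (t-1)*b) at_top"
proof -
  define al where "al y = -2*(1-a-b)*(1-y) + t*a*y - t*b*(1-y) - t*(1-a-b)*y" for y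
  define be where "be y = b*y^2 + (1-a-b)*(1-y)^2 - t*a*y*(1-y)" for y
  have e: "eventually (\<lambda>x. (1 + (t-1)*b) + al (gf k x) * inverse x + be (gf k x) * (inverse x)^2
      = (tA x (gf k x) (1-x-gf k x) a b (1-a-b) - t * tB x (gf k x) (1-x-gf k x) a b (1-a-b)) / x^2) at_top"
    using eventually_gt_at_top[of 0]
  proof (rule eventually_mono)
    fix x :: real assume "x > 0"
    hence x0: "x \<noteq> 0" by simp
    show "(1 + (t-1)*b) + al (gf k x) * inverse x + be (gf k x) * (inverse x)^2
      = (tA x (gf k x) (1-x-gf k x) a b (1-a-b) - t * tB x (gf k x) (1-x-gf k x) a b (1-a-b)) / x^2"
      unfolding tAB_expand al_def[symmetric] be_def[symmetric] using x0
      by (simp add: field_simps power2_eq_square)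
  qed
  have "((\<lambda>x. (1 + (t-1)*b) + al (gf k x) * inverse x + be (gf k x) * (inverse x)^2)
        \<longlongrightarrow> (1 + (t-1)*b) + al (1 / mk k) * 0 + be (1 / mk k) * 0^2) at_top"
    unfolding al_def be_def by (intro tendsto_intros gf_lim[OF k1] inv_lim)
  hence "((\<lambda>x. (1 + (t-1)*b) + al (gf k x) * inverse x + be (gf k x) * (inverse x)^2)
        \<longlongrightarrow> 1 + (t-1)*b) at_top" by simp
  thus ?thesis using e by (rule Lim_transform_eventually)
qed

lemma tail_exists:
  assumes k1: "k > 1" and bm: "mk k * b > 1" and bk: "1 + (k-1)*b > 0"
  shows "\<exists>x. mk k * x > 1
     \<and> tA x (gf k x) (1-x-gf k x) a b (1-a-b) - k * tB x (gf k x) (1-x-gf k x) a b (1-a-b) > 0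
     \<and> tA x (gf k x) (1-x-gf k x) a b (1-a-b) - kq k * tB x (gf k x) (1-x-gf k x) a b (1-a-b) < 0"
proof -
  have m0: "mk k > 0" using mk_pos[OF k1] .
  have q: "kq k = 1 - mk k" unfolding mk_def by simp
  have lq: "1 + (kq k - 1)*b < 0" unfolding q using bm by (simp add: algebra_simps)
  have ev1: "eventually (\<lambda>x. (tA x (gf k x) (1-x-gf k x) a b (1-a-b) - k * tB x (gf k x) (1-x-gf k x) a b (1-a-b)) / x^2 > 0) at_top"
    using order_tendstoD(1)[OF tail_lim[OF k1, of a b k] bk] .
  have ev2: "eventually (\<lambda>x. (tA x (gf k x) (1-x-gf k x) a b (1-a-b) - kq k * tB x (gf k x) (1-x-gf k x) a b (1-a-b)) / x^2 < 0) at_top"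
    using order_tendstoD(2)[OF tail_lim[OF k1, of a b "kq k"] lq] .
  have ev3: "eventually (\<lambda>x. x > 1 / mk k) at_top" by (rule eventually_gt_at_top)
  have "eventually (\<lambda>x. (tA x (gf k x) (1-x-gf k x) a b (1-a-b) - k * tB x (gf k x) (1-x-gf k x) a b (1-a-b)) / x^2 > 0
     \<and> (tA x (gf k x) (1-x-gf k x) a b (1-a-b) - kq k * tB x (gf k x) (1-x-gf k x) a b (1-a-b)) / x^2 < 0
     \<and> x > 1 / mk k) at_top"
    by (intro eventually_conj ev1 ev2 ev3)
  then obtain x where x: "(tA x (gf k x) (1-x-gf k x) a b (1-a-b) - k * tB x (gf k x) (1-x-gf k x) a b (1-a-b)) / x^2 > 0"
     "(tA x (gf k x) (1-x-gf k x) a b (1-a-b) - kq k * tB x (gf k x) (1-x-gf k x) a b (1-a-b)) / x^2 < 0"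
     "x > 1 / mk k"
    using eventually_happens[of _ "at_top::real filter"] by auto
  have mx: "mk k * x > 1" using x(3) m0 by (simp add: field_simps)
  have "x^2 > 0" using x(1) by (cases "x = 0") auto
  thus ?thesis using x mx by (intro exI[of _ x]) (simp add: zero_less_divide_iff divide_less_0_iff)
qed

lemma polar_t: "polar k (a, b, 1) (x, y, 1) = -(tA x y (1-x-y) a b (1-a-b) - k * tB x y (1-x-y) a b (1-a-b))"
  unfolding polar_eq tA_def tB_def by algebra

lemma graph_arc:
  assumes d: "d > 0" and sub: "ball x0 d \<subseteq> {x. mk k * x > 1}"
  shows "open_arc ((\<lambda>x. (x, gf k x)) ` ball x0 d)" "connected ((\<lambda>x. (x, gf k x)) ` ball x0 d)"
proof -
  have c: "continuous_on (ball x0 d) (\<lambda>x. (x, gf k x))"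
    by (intro continuous_intros continuous_on_subset[OF gf_cont sub])
  show "connected ((\<lambda>x. (x, gf k x)) ` ball x0 d)"
    using connected_continuous_image[OF c] by simp
  have "homeomorphism (ball x0 d) ((\<lambda>x. (x, gf k x)) ` ball x0 d) (\<lambda>x. (x, gf k x)) fst"
    by (rule homeomorphismI) (auto intro: c continuous_intros)
  hence "(ball x0 d) homeomorphic ((\<lambda>x. (x, gf k x)) ` ball x0 d)" unfolding homeomorphic_def by blast
  hence h1: "((\<lambda>x. (x, gf k x)) ` ball x0 d) homeomorphic (ball x0 d)" using homeomorphic_sym by blast
  have h2: "ball x0 d homeomorphic ball (1/2::real) (1/2)" using homeomorphic_balls(1)[OF d, of "1/2" x0] by simp
  have "ball (1/2::real) (1/2) = {0<..<1}" unfolding ball_eq_greaterThanLessThan by simp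
  thus "open_arc ((\<lambda>x. (x, gf k x)) ` ball x0 d)" unfolding open_arc_def using homeomorphic_trans[OF h1 h2] by simp
qed


lemma local_ball:
  fixes F :: "real \<Rightarrow> real"
  assumes k1: "k > 1" and mx: "mk k * x0 > 1"
    and cont: "isCont F x0" and pos: "F x0 > 0"
  shows "\<exists>d>0. ball x0 d \<subseteq> {x. mk k * x > 1} \<and> (\<forall>x\<in>ball x0 d. F x > 0)"
proof -
  have op: "open {x::real. mk k * x > 1}" by (intro open_Collect_less continuous_intros)
  have e1: "eventually (\<lambda>x. x \<in> {x. mk k * x > 1}) (nhds x0)"
    using eventually_nhds_in_open[OF op] mx by simp
  have "(F \<longlongrightarrow> F x0) (nhds x0)" using cont tendsto_at_iff_tendsto_nhds isCont_def by blast
  hence e2: "eventually (\<lambda>x. F x > 0) (nhds x0)" using order_tendstoD(1)[OF _ pos] by blast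
  have "eventually (\<lambda>x. x \<in> {x. mk k * x > 1} \<and> F x > 0) (nhds x0)" by (intro eventually_conj e1 e2)
  then obtain d where d: "d > 0" "\<forall>x. dist x x0 < d \<longrightarrow> x \<in> {x. mk k * x > 1} \<and> F x > 0"
    unfolding eventually_nhds_metric by auto
  show ?thesis using d by (intro exI[of _ d]) (auto simp: dist_commute)
qed

lemma gf_isCont: "mk k * x0 > 1 \<Longrightarrow> isCont (gf k) x0"
proof -
  assume mx: "mk k * x0 > 1"
  have op: "open {x::real. mk k * x > 1}" by (intro open_Collect_less continuous_intros)
  show ?thesis using gf_cont[of k] continuous_on_eq_continuous_at[OF op] mx by auto
qed

theorem proposition2p3:
  fixes k a b :: real
  assumes "k > 1" and "a < - 1 / (k - 1)" and "b > - 1 / (k - 1)"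
  shows "(Hess k a b 1 \<ge> 0 \<longrightarrow>
            (\<forall>S \<in> components {D \<in> C2 k. polar k (a, b, 1) (fst D, snd D, 1) > 0}.
               \<exists>T \<subseteq> S. open_arc T \<and> (\<forall>D \<in> T. visible k (a, b) D)))
       \<and> (Hess k a b 1 \<le> 0 \<longrightarrow>
            (\<exists>T. T \<subseteq> {D \<in> C2 k. polar k (a, b, 1) (fst D, snd D, 1) < 0} \<and> open_arc T
                 \<and> (\<forall>D \<in> T. \<not> visible k (a, b) D)))"
proof -
  note k1 = assms(1)
  have k0: "k \<noteq> 0" using k1 by simp
  have m0: "mk k > 0" using mk_pos[OF k1] .
  have HA: "Hess k a b 1 = 54*k^2 * Gc (kq k) a b (1-a-b)" using Hess_Gc[OF k0] .
  have k2: "54*k^2 > 0" using k0 by simp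
  define P where "P = {D \<in> C2 k. polar k (a, b, 1) (fst D, snd D, 1) > 0}"
  have polcont: "isCont (\<lambda>x. polar k (a, b, 1) (x, gf k x, 1)) x0" if "mk k * x0 > 1" for x0
    unfolding polar_eq using gf_isCont[OF that] by (intro continuous_intros) auto
  show ?thesis
  proof (intro conjI impI)
    assume H0: "Hess k a b 1 \<ge> 0"
    hence G0: "Gc (kq k) a b (1-a-b) \<ge> 0" using HA k2 by (simp add: zero_le_mult_iff)
    have visP: "visible k (a, b) D" if D: "D \<in> P" for D
    proof -
      obtain x y where xy: "D = (x, y)" by (cases D)
      have DC: "(x, y) \<in> C2 k" and pol: "polar k (a, b, 1) (x, y, 1) > 0" using D unfolding P_def xy by auto
      have Pf: "tA x y (1-x-y) a b (1-a-b) - k * tB x y (1-x-y) a b (1-a-b) < 0" using pol unfolding polar_t by simp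
      have reg: "x > 0" "y > 0" "1 - x - y < 0" using DC unfolding C2_def by auto
      have rel: "x^3 + y^3 + (1-x-y)^3 = 3 * kq k * x * y * (1-x-y)"
        using C2_Gc[OF k1 DC] unfolding Gc_def by simp
      have "tA x y (1-x-y) a b (1-a-b) - kq k * tB x y (1-x-y) a b (1-a-b) \<ge> 0"
      proof (rule ccontr)
        assume "\<not> ?thesis"
        hence "tA x y (1-x-y) a b (1-a-b) - kq k * tB x y (1-x-y) a b (1-a-b) < 0" by simp
        from keyW1[OF k1 kq_def reg rel this Pf] G0 show False by simp
      qed
      thus ?thesis unfolding xy by (rule vis_T[OF k1 DC])
    qed
    show "\<forall>S \<in> components {D \<in> C2 k. polar k (a, b, 1) (fst D, snd D, 1) > 0}.
               \<exists>T \<subseteq> S. open_arc T \<and> (\<forall>D \<in> T. visible k (a, b) D)"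
    proof
      fix S assume S: "S \<in> components {D \<in> C2 k. polar k (a, b, 1) (fst D, snd D, 1) > 0}"
      hence S': "S \<in> components P" unfolding P_def .
      obtain D0 where D0: "D0 \<in> S" using in_components_nonempty[OF S'] by auto
      have D0P: "D0 \<in> P" using in_components_subset[OF S'] D0 by auto
      obtain x0 y0 where xy0: "D0 = (x0, y0)" by (cases D0)
      have DC0: "(x0, y0) \<in> C2 k" using D0P unfolding P_def xy0 by auto
      have mx0: "mk k * x0 > 1" and y0: "y0 = gf k x0" using C2_gf[OF k1 DC0] by auto
      have pol0: "polar k (a, b, 1) (x0, gf k x0, 1) > 0" using D0P unfolding P_def xy0 y0 by auto
      obtain d where d: "d > 0" "ball x0 d \<subseteq> {x. mk k * x > 1}"
          "\<forall>x\<in>ball x0 d. polar k (a, b, 1) (x, gf k x, 1) > 0"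
        using local_ball[OF k1 mx0 polcont[OF mx0] pol0] by auto
      define T where "T = (\<lambda>x. (x, gf k x)) ` ball x0 d"
      have TP: "T \<subseteq> P"
      proof
        fix D assume "D \<in> T"
        then obtain x where x: "x \<in> ball x0 d" "D = (x, gf k x)" unfolding T_def by auto
        have "mk k * x > 1" using x d(2) by auto
        thus "D \<in> P" unfolding P_def using gf_C2[OF k1] d(3) x by auto
      qed
      have cT: "connected T" and aT: "open_arc T" unfolding T_def using graph_arc[OF d(1,2)] by auto
      have "D0 \<in> T" unfolding T_def xy0 y0 using d(1) by auto
      hence "S \<inter> T \<noteq> {}" using D0 by auto
      hence TS: "T \<subseteq> S" using components_maximal[OF S' cT TP] by simp
      show "\<exists>T \<subseteq> S. open_arc T \<and> (\<forall>D \<in> T. visible k (a, b) D)"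
        using TS aT TP visP by blast
    qed
  next
    assume H0: "Hess k a b 1 \<le> 0"
    hence G0: "Gc (kq k) a b (1-a-b) \<le> 0" using HA k2 by (simp add: mult_le_0_iff)
    have g0: "gk k > 0" by (rule gk_pos)
    have prodA: "l1 k a * l2 k b * l3 k a b \<ge> gk k"
    proof -
      have "3/(mk k)^2 * (gk k - l1 k a * l2 k b * l3 k a b) \<le> 0" using G0 unfolding Gc_l[OF k1] .
      moreover have "3/(mk k)^2 > 0" using m0 by simp
      ultimately have "gk k - l1 k a * l2 k b * l3 k a b \<le> 0"
        by (metis mult_pos_pos not_le)
      thus ?thesis by simp
    qed
    have km: "mk k = (k-1)*(k+2)^2/(3*k^2)" using mk_eq[OF k0] .
    have k10: "k - 1 > 0" using k1 by simp
    have ak: "a*(k-1) < -1" using assms(2) k10 by (simp add: field_simps)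
    have bk: "1 + (k-1)*b > 0" using assms(3) k10 by (simp add: field_simps)
    have a0: "a < 0"
    proof -
      have "- 1 / (k - 1) < 0" using k10 by simp
      thus ?thesis using assms(2) by linarith
    qed
    have L1n: "l1 k a < 0" unfolding l1_def using mult_pos_neg[OF m0 a0] by linarith
    have L2p: "l2 k b > 0"
    proof (rule ccontr)
      assume "\<not> l2 k b > 0"
      hence L2: "l2 k b \<le> 0" by simp
      have "l2 k b \<noteq> 0" using prodA g0 by auto
      hence L2n: "l2 k b < 0" using L2 by simp
      have p12: "l1 k a * l2 k b > 0" using L1n L2n by (simp add: mult_neg_neg)
      have L3p: "l3 k a b > 0"
      proof (rule ccontr)
        assume "\<not> l3 k a b > 0"
        hence "l3 k a b \<le> 0" by simp
        hence "l1 k a * l2 k b * l3 k a b \<le> 0" using p12 by (simp add: mult_nonneg_nonpos)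
        thus False using prodA g0 by simp
      qed
      have mb: "mk k * b < 1" using L2n unfolding l2_def by simp
      have ma: "mk k * a < - mk k / (k-1)"
      proof -
        have "mk k * (a*(k-1)) < mk k * (-1)" using ak m0 by (simp only: mult_strict_left_mono)
        hence "(mk k * a) * (k-1) < - mk k" by (simp add: algebra_simps)
        thus ?thesis using k10 by (simp add: field_simps)
      qed
      have "mk k / (k-1) + mk k = (k+2)^2/(3*k)" unfolding km using k10 k0
        by (simp add: field_simps) algebra
      moreover have "(k+2)^2/(3*k) > 2"
      proof -
        have "(k+2)^2 - 6*k = (k-1)^2 + 3" by (simp add: algebra_simps power2_eq_square)
        hence "(k+2)^2 > 2*(3*k)" by (smt (verit) zero_le_power2)
        thus ?thesis using k1 by (simp add: field_simps)
      qed
      ultimately have "l3 k a b < 0" unfolding l3_def using ma mb by linarith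
      thus False using L3p by simp
    qed
    have bm: "mk k * b > 1" using L2p unfolding l2_def by simp
    obtain x1 where x1: "mk k * x1 > 1"
      "tA x1 (gf k x1) (1-x1-gf k x1) a b (1-a-b) - k * tB x1 (gf k x1) (1-x1-gf k x1) a b (1-a-b) > 0"
      "tA x1 (gf k x1) (1-x1-gf k x1) a b (1-a-b) - kq k * tB x1 (gf k x1) (1-x1-gf k x1) a b (1-a-b) < 0"
      using tail_exists[OF k1 bm bk] by auto
    define F where "F x = min (tA x (gf k x) (1-x-gf k x) a b (1-a-b) - k * tB x (gf k x) (1-x-gf k x) a b (1-a-b))
        (-(tA x (gf k x) (1-x-gf k x) a b (1-a-b) - kq k * tB x (gf k x) (1-x-gf k x) a b (1-a-b)))" for x
    have Fc: "isCont F x1" unfolding F_def tA_def tB_def using gf_isCont[OF x1(1)]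
      by (intro continuous_intros) auto
    have Fp: "F x1 > 0" unfolding F_def using x1 by simp
    obtain d where d: "d > 0" "ball x1 d \<subseteq> {x. mk k * x > 1}" "\<forall>x\<in>ball x1 d. F x > 0"
      using local_ball[OF k1 x1(1) Fc Fp] by auto
    define T where "T = (\<lambda>x. (x, gf k x)) ` ball x1 d"
    have aT: "open_arc T" unfolding T_def using graph_arc[OF d(1,2)] by auto
    have TP: "T \<subseteq> {D \<in> C2 k. polar k (a, b, 1) (fst D, snd D, 1) < 0} \<and> (\<forall>D \<in> T. \<not> visible k (a, b) D)"
    proof (intro conjI subsetI ballI)
      fix D assume "D \<in> T"
      then obtain x where x: "x \<in> ball x1 d" "D = (x, gf k x)" unfolding T_def by auto
      have mx: "mk k * x > 1" using x d(2) by auto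
      have DC: "(x, gf k x) \<in> C2 k" using gf_C2[OF k1 mx] .
      have Fx: "F x > 0" using d(3) x by auto
      have A1: "tA x (gf k x) (1-x-gf k x) a b (1-a-b) - k * tB x (gf k x) (1-x-gf k x) a b (1-a-b) > 0"
        and A2: "tA x (gf k x) (1-x-gf k x) a b (1-a-b) - kq k * tB x (gf k x) (1-x-gf k x) a b (1-a-b) < 0"
        using Fx unfolding F_def by auto
      show "D \<in> {D \<in> C2 k. polar k (a, b, 1) (fst D, snd D, 1) < 0}"
        using DC A1 x(2) unfolding polar_t by simp
      show "\<not> visible k (a, b) D" using notvis_T[OF k1 DC] A2 x(2) by simp
    qed
    show "\<exists>T. T \<subseteq> {D \<in> C2 k. polar k (a, b, 1) (fst D, snd D, 1) < 0} \<and> open_arc T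
                 \<and> (\<forall>D \<in> T. \<not> visible k (a, b) D)"
      using aT TP by blast
  qed
qed


end
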